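(* Let $0<\alpha\le 1$. There exists $n_0(\alpha)$ such that the following holds for all integers $n\ge n_0(\alpha)$ and $m\in\mathbb{N}$ with $\alpha n\le m\le n/2$. Let $G$ be a digraph on $n$ vertices with $\delta^0(G)\ge \delta n$, where $0<\delta<1$. Then there exists a vertex subset $W\subseteq V(G)$ with $|W|=m$ such that \[ \frac{\delta^0(G[W])}{m}\ \ge\ \delta-2n^{-1/3}\quad\text{and}\quad \frac{\delta^0(G\setminus W)}{n-m}\ \ge\ \delta-2n^{-1/3}. \]
   Context: For a digraph $G$, $d^+(v)$ and $d^-(v)$ denote the out-degree and in-degree of a vertex $v$, and $\delta^0(G)=\min\{d^+(v),d^-(v):v\in V(G)\}$ is the minimum semi-degree. For $W\subseteq V(G)$, $G[W]$ is the subdigraph induced on $W$, and $G\setminus W$ denotes $G[V(G)\setminus W]$. *)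

theory Defs
  imports Complex_Main
begin

definition digraph :: "'a set \<Rightarrow> ('a \<times> 'a) set \<Rightarrow> bool" where
  "digraph V E \<longleftrightarrow> finite V \<and> E \<subseteq> V \<times> V \<and> (\<forall>v. (v, v) \<notin> E)"

definition out_deg :: "'a set \<Rightarrow> ('a \<times> 'a) set \<Rightarrow> 'a \<Rightarrow> nat" where
  "out_deg V E v = card {w \<in> V. (v, w) \<in> E}"

definition in_deg :: "'a set \<Rightarrow> ('a \<times> 'a) set \<Rightarrow> 'a \<Rightarrow> nat" where
  "in_deg V E v = card {w \<in> V. (w, v) \<in> E}"

text \<open>Minimum semi-degree of the digraph induced on V by E (for nonempty V).\<close>
definition min_semideg :: "'a set \<Rightarrow> ('a \<times> 'a) set \<Rightarrow> nat" where
  "min_semideg V E = Min ((out_deg V E ` V) \<union> (in_deg V E ` V))"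

definition induced_arcs :: "('a \<times> 'a) set \<Rightarrow> 'a set \<Rightarrow> ('a \<times> 'a) set" where
  "induced_arcs E W = E \<inter> (W \<times> W)"

end

theory Submission
  imports Defs "HOL-Probability.Probability"
begin

lemma tail:
  fixes V S :: "'a set" and p t :: real
  assumes fin: "finite V" and S: "S \<subseteq> V" and p: "p \<in> {0..1}" and t: "t > 0" and n: "card V > 0"
  shows "measure_pmf.prob (Pi_pmf V False (\<lambda>_. bernoulli_pmf p))
          {f. t \<le> \<bar>real (card {x\<in>S. f x}) - real (card S) * p\<bar>} \<le> 2 * exp (-2 * t\<^sup>2 / real (card V))"
proof (cases "S = {}")
  case True
  then show ?thesis using t by simp
next
  case False
  have finS: "finite S" using fin S finite_subset by blast
  hence k: "card S > 0" using False by (simp add: card_gt_0_iff)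
  have kn: "card S \<le> card V" using fin S card_mono by blast
  let ?M = "Pi_pmf V False (\<lambda>_. bernoulli_pmf p)"
  have eq: "map_pmf (\<lambda>f. card {x\<in>S. f x}) ?M = binomial_pmf (card S) p"
  proof -
    have "binomial_pmf (card S) p = map_pmf (\<lambda>f. card {x\<in>S. f x}) (Pi_pmf S False (\<lambda>_. bernoulli_pmf p))"
      by (rule binomial_pmf_altdef'[OF finS refl p])
    also have "\<dots> = map_pmf (\<lambda>f. card {x\<in>S. f x}) (map_pmf (\<lambda>f x. if x \<in> S then f x else False) ?M)"
      by (subst Pi_pmf_subset[OF fin S]) rule
    also have "\<dots> = map_pmf (\<lambda>f. card {x\<in>S. f x}) ?M"
      by (simp add: pmf.map_comp o_def cong: conj_cong)
    finally show ?thesis by simp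
  qed
  have "measure_pmf.prob ?M {f. t \<le> \<bar>real (card {x\<in>S. f x}) - real (card S) * p\<bar>}
      = measure_pmf.prob (map_pmf (\<lambda>f. card {x\<in>S. f x}) ?M) {x. \<bar>real x - real (card S) * p\<bar> \<ge> t}"
    by (simp add: vimage_def)
  also have "\<dots> \<le> 2 * exp (-2 * t\<^sup>2 / real (card S))"
    unfolding eq
    by (rule binomial_distribution.prob_abs_ge) (use p k t in \<open>auto simp: binomial_distribution_def\<close>)
  also have "\<dots> \<le> 2 * exp (-2 * t\<^sup>2 / real (card V))"
    using kn k t by (auto simp: frac_le divide_simps)
  finally show ?thesis .
qed
lemma exists_good:
  fixes V :: "'a set" and F :: "'a set set" and p t :: real
  assumes fin: "finite V" and F: "finite F" "\<forall>S\<in>F. S \<subseteq> V" and p: "p \<in> {0..1}" and t: "t > 0" and n: "card V > 0"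
    and small: "real (card F) * (2 * exp (-2 * t\<^sup>2 / real (card V))) < 1"
  shows "\<exists>f. \<forall>S\<in>F. \<bar>real (card {x\<in>S. f x}) - real (card S) * p\<bar> < t"
proof (rule ccontr)
  assume nex: "\<not> ?thesis"
  let ?M = "Pi_pmf V False (\<lambda>_. bernoulli_pmf p)"
  let ?A = "\<lambda>S. {f. t \<le> \<bar>real (card {x\<in>S. f x}) - real (card S) * p\<bar>}"
  have U: "(\<Union>S\<in>F. ?A S) = UNIV" using nex by (auto simp: not_less)
  have "measure_pmf.prob ?M (\<Union>S\<in>F. ?A S) \<le> (\<Sum>S\<in>F. measure_pmf.prob ?M (?A S))"
    by (rule measure_pmf.finite_measure_subadditive_finite) (use F in auto)
  also have "\<dots> \<le> (\<Sum>S\<in>F. 2 * exp (-2 * t\<^sup>2 / real (card V)))"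
    by (rule sum_mono, rule tail) (use assms in auto)
  also have "\<dots> < 1" using small by simp
  finally show False unfolding U by simp
qed

lemma adjust:
  fixes V W0 :: "'a set"
  assumes fin: "finite V" and W0: "W0 \<subseteq> V" and m: "m \<le> card V"
  shows "\<exists>W\<subseteq>V. card W = m \<and> (\<forall>S. \<bar>real (card (S \<inter> W)) - real (card (S \<inter> W0))\<bar> \<le> \<bar>real (card W0) - real m\<bar>)"
proof (cases "m \<le> card W0")
  case True
  obtain W where W: "W \<subseteq> W0" "card W = m" using obtain_subset_with_card_n[OF True] by metis
  have finW0: "finite W0" using fin W0 finite_subset by blast
  have "\<bar>real (card (S \<inter> W)) - real (card (S \<inter> W0))\<bar> \<le> \<bar>real (card W0) - real m\<bar>" for S
  proof -
    have "S \<inter> W0 = (S \<inter> W) \<union> (S \<inter> (W0 - W))" using W by auto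
    hence "card (S \<inter> W0) \<le> card (S \<inter> W) + card (S \<inter> (W0 - W))" by (metis card_Un_le)
    moreover have "card (S \<inter> (W0 - W)) \<le> card (W0 - W)" by (rule card_mono) (use finW0 in auto)
    moreover have "card (W0 - W) = card W0 - m" using W finW0 by (simp add: card_Diff_subset finite_subset)
    moreover have "card (S \<inter> W) \<le> card (S \<inter> W0)" by (rule card_mono) (use finW0 W in auto)
    ultimately show ?thesis using True by linarith
  qed
  thus ?thesis using W W0 by blast
next
  case False
  have finW0: "finite W0" using fin W0 finite_subset by blast
  have "m - card W0 \<le> card (V - W0)" using m W0 finW0 by (simp add: card_Diff_subset)
  then obtain X where X: "X \<subseteq> V - W0" "card X = m - card W0" using obtain_subset_with_card_n by metis
  have finX: "finite X" using X fin finite_subset by blast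
  define W where "W = W0 \<union> X"
  have cW: "card W = m" unfolding W_def using X False finW0 finX
    by (subst card_Un_disjoint) auto
  have "\<bar>real (card (S \<inter> W)) - real (card (S \<inter> W0))\<bar> \<le> \<bar>real (card W0) - real m\<bar>" for S
  proof -
    have "S \<inter> W = (S \<inter> W0) \<union> (S \<inter> X)" unfolding W_def by auto
    hence "card (S \<inter> W) \<le> card (S \<inter> W0) + card (S \<inter> X)" by (metis card_Un_le)
    moreover have "card (S \<inter> X) \<le> card X" by (rule card_mono) (use finX in auto)
    moreover have "card (S \<inter> W0) \<le> card (S \<inter> W)" by (rule card_mono) (use finW0 finX W_def in auto)
    ultimately show ?thesis using False X by linarith
  qed
  moreover have "W \<subseteq> V" using W0 X W_def by auto
  ultimately show ?thesis using cW by blast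
qed
lemma small_bound:
  fixes a x :: real
  assumes a: "a > 0" and x1: "x \<ge> 1" and xa: "x \<ge> 96 / a^8"
  shows "(4 * x^3 + 2) * exp (-2 * a^2 * x) < 1"
proof -
  have y: "a^2 * x / 2 > 0" using a x1 by simp
  have "exp (2 * a^2 * x) = exp (a^2 * x / 2) ^ 4"
    by (simp add: exp_of_nat_mult[symmetric])
  also have "exp (a^2 * x / 2) \<ge> 1 + a^2 * x / 2" by (rule exp_ge_add_one_self)
  hence "exp (a^2 * x / 2) ^ 4 \<ge> (1 + a^2 * x / 2) ^ 4" by (rule power_mono) (use y in simp)
  moreover have "(1 + a^2 * x / 2) ^ 4 > (a^2 * x / 2) ^ 4" by (rule power_strict_mono) (use y in auto)
  moreover have "(a^2 * x / 2) ^ 4 = a^8 * x * x^3 / 16" by (simp add: power_mult_distrib field_simps power_Suc[symmetric] del: power_Suc)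
  moreover have "a^8 * x \<ge> 96" using xa a by (simp add: field_simps)
  hence "a^8 * x * x^3 / 16 \<ge> 96 * x^3 / 16" using x1 by (intro divide_right_mono mult_right_mono) auto
  moreover have "96 * x^3 / 16 \<ge> 4 * x^3 + 2" using x1 one_le_power[OF x1, of 3] by simp
  ultimately have "4 * x^3 + 2 < exp (2 * a^2 * x)" by linarith
  hence "(4 * x^3 + 2) * exp (-2 * a^2 * x) < exp (2 * a^2 * x) * exp (-2 * a^2 * x)"
    by (intro mult_strict_right_mono) auto
  also have "\<dots> = 1" by (simp flip: exp_add)
  finally show ?thesis .
qed

lemma min_semideg_ge:
  assumes "finite W" "W \<noteq> {}" "\<And>v. v \<in> W \<Longrightarrow> real (out_deg W E v) \<ge> B \<and> real (in_deg W E v) \<ge> B"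
  shows "real (min_semideg W E) \<ge> B"
proof -
  have "min_semideg W E \<in> (out_deg W E ` W) \<union> (in_deg W E ` W)"
    unfolding min_semideg_def by (rule Min_in) (use assms in auto)
  thus ?thesis using assms(3) by auto
qed

lemma min_semideg_le:
  assumes "finite V" "v \<in> V"
  shows "min_semideg V E \<le> out_deg V E v" "min_semideg V E \<le> in_deg V E v"
  unfolding min_semideg_def using assms by (auto intro: Min_le)
theorem proposition2p3:
  fixes \<alpha> :: real
  assumes "0 < \<alpha>" and "\<alpha> \<le> 1"
  shows "\<exists>n0::nat. \<forall>n m :: nat. n \<ge> n0 \<longrightarrow> \<alpha> * real n \<le> real m \<longrightarrow> real m \<le> real n / 2 \<longrightarrow>
    (\<forall>(V :: nat set) E (\<delta> :: real).
       digraph V E \<longrightarrow> card V = n \<longrightarrow> 0 < \<delta> \<longrightarrow> \<delta> < 1 \<longrightarrow>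
       real (min_semideg V E) \<ge> \<delta> * real n \<longrightarrow>
       (\<exists>W \<subseteq> V. card W = m \<and>
          real (min_semideg W (induced_arcs E W)) / real m \<ge> \<delta> - 2 * real n powr (-1/3) \<and>
          real (min_semideg (V - W) (induced_arcs E (V - W))) / real (n - m)
             \<ge> \<delta> - 2 * real n powr (-1/3)))"
proof -
  define K :: real where "K = 1 + 96 / \<alpha>^8"
  have K1: "K \<ge> 1" unfolding K_def using assms by simp
  define n0 :: nat where "n0 = nat \<lceil>K^3\<rceil> + 1"
  show ?thesis
  proof (rule exI[of _ n0], intro allI impI)
    fix n m :: nat and V :: "nat set" and E and \<delta> :: real
    assume nn0: "n \<ge> n0" and am: "\<alpha> * real n \<le> real m" and mn: "real m \<le> real n / 2"
      and G: "digraph V E" and cV: "card V = n" and d0: "0 < \<delta>" and d1: "\<delta> < 1"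
      and md: "real (min_semideg V E) \<ge> \<delta> * real n"
    have finV: "finite V" and EV: "E \<subseteq> V \<times> V" using G by (auto simp: digraph_def)
    have nK: "real n \<ge> K^3" using nn0 unfolding n0_def by linarith
    have npos: "n > 0" using nn0 unfolding n0_def by simp
    have mpos: "m > 0" using am npos assms(1)
      by (metis mult_pos_pos not_gr_zero of_nat_0 of_nat_0_less_iff order.strict_trans2 less_irrefl)
    have mle: "m \<le> n - m" using mn by linarith
    have rnm: "real (n - m) = real n - real m" using mle by simp
    define x where "x = real n powr (1/3)"
    have xpos: "x > 0" unfolding x_def using npos by simp
    have x3: "x^3 = real n"
    proof -
      have "x powr (real 3) = x^3" using xpos by (intro powr_realpow) simp
      moreover have "x powr (real 3) = real n powr (1/3 * real 3)" unfolding x_def by (metis powr_powr)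
      ultimately show ?thesis using npos by simp
    qed
    have nx: "real n powr (-1/3) = 1 / x"
      unfolding x_def by (simp add: powr_minus_divide[symmetric])
    have xK: "x \<ge> K"
    proof -
      have "(K^3) powr (1/3) \<le> x" unfolding x_def by (rule powr_mono2) (use nK K1 in auto)
      moreover have "(K^3) powr (1/3) = K"
      proof -
        have "K powr (real 3) = K^3" using K1 by (intro powr_realpow) simp
        hence "(K^3) powr (1/3) = K powr (real 3 * (1/3))" by (metis powr_powr)
        thus ?thesis using K1 by simp
      qed
      ultimately show ?thesis by simp
    qed
    define p :: real where "p = real m / real n"
    have p01: "p \<in> {0..1}" unfolding p_def using mn npos by auto
    define t :: real where "t = \<alpha> * x^2"
    have tpos: "t > 0" unfolding t_def using assms xpos by simp
    define Nout where "Nout = (\<lambda>v. {w\<in>V. (v, w) \<in> E})"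
    define Nin where "Nin = (\<lambda>v. {w\<in>V. (w, v) \<in> E})"
    define F where "F = insert V (Nout ` V \<union> Nin ` V)"
    have finF: "finite F" unfolding F_def using finV by simp
    have FV: "\<forall>S\<in>F. S \<subseteq> V" unfolding F_def Nout_def Nin_def by auto
    have cF: "card F \<le> 2 * n + 1"
    proof -
      have "card F \<le> Suc (card (Nout ` V \<union> Nin ` V))" unfolding F_def using finV by (simp add: card_insert_if)
      also have "card (Nout ` V \<union> Nin ` V) \<le> card (Nout ` V) + card (Nin ` V)" by (rule card_Un_le)
      also have "card (Nout ` V) \<le> n" using card_image_le[OF finV] cV by simp
      also have "card (Nin ` V) \<le> n" using card_image_le[OF finV] cV by simp
      finally show ?thesis by simp
    qed
    have tt: "-2 * t\<^sup>2 / real (card V) = -2 * \<alpha>^2 * x"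
      unfolding cV t_def x3[symmetric] using xpos by (simp add: field_simps power2_eq_square power3_eq_cube)
    have sb: "(4 * x^3 + 2) * exp (-2 * \<alpha>^2 * x) < 1"
    proof -
      have q: "96 / \<alpha>^8 \<ge> 0" using assms by simp
      have "x \<ge> 1" using xK K1 by linarith
      moreover have "x \<ge> 96 / \<alpha>^8" using xK q unfolding K_def by linarith
      ultimately show ?thesis using assms by (intro small_bound) auto
    qed
    have small: "real (card F) * (2 * exp (-2 * t\<^sup>2 / real (card V))) < 1"
    proof -
      have "real (card F) * (2 * exp (-2 * t\<^sup>2 / real (card V))) \<le> (2 * real n + 1) * (2 * exp (-2 * \<alpha>^2 * x))"
        unfolding tt by (intro mult_right_mono) (use cF in auto)
      also have "\<dots> = (4 * x^3 + 2) * exp (-2 * \<alpha>^2 * x)" unfolding x3 by (simp add: algebra_simps)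
      finally show ?thesis using sb by linarith
    qed
    obtain f where f: "\<forall>S\<in>F. \<bar>real (card {x\<in>S. f x}) - real (card S) * p\<bar> < t"
      using exists_good[OF finV finF FV p01 tpos _ small] cV npos by auto
    define W0 where "W0 = {x\<in>V. f x}"
    have W0V: "W0 \<subseteq> V" unfolding W0_def by auto
    have W0m: "\<bar>real (card W0) - real m\<bar> < t"
    proof -
      have "V \<in> F" unfolding F_def by simp
      hence "\<bar>real (card {x\<in>V. f x}) - real (card V) * p\<bar> < t" using f by blast
      moreover have "real (card V) * p = real m" unfolding p_def cV using npos by simp
      ultimately show ?thesis unfolding W0_def by simp
    qed
    have mV: "m \<le> card V" using cV mle by simp
    obtain W where WV: "W \<subseteq> V" and cW: "card W = m"
      and Wc0: "\<And>S. \<bar>real (card (S \<inter> W)) - real (card (S \<inter> W0))\<bar> \<le> \<bar>real (card W0) - real m\<bar>"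
      using adjust[OF finV W0V mV] by blast
    have Wc: "\<bar>real (card (S \<inter> W)) - real (card (S \<inter> W0))\<bar> < t" for S
      using Wc0[of S] W0m by linarith
    have close: "\<bar>real (card (S \<inter> W)) - real (card S) * p\<bar> < 2 * t" if "S \<in> F" for S
    proof -
      have "{x\<in>S. f x} = S \<inter> W0" using FV that unfolding W0_def by auto
      hence "\<bar>real (card (S \<inter> W0)) - real (card S) * p\<bar> < t" using f that by auto
      thus ?thesis using Wc[of S] by linarith
    qed
    have close2: "\<bar>real (card (S \<inter> (V - W))) - real (card S) * (1 - p)\<bar> < 2 * t" if "S \<in> F" for S
    proof -
      have "S \<inter> (V - W) = S - (S \<inter> W)" using FV that by auto
      moreover have "finite S" using FV that finV finite_subset by blast
      ultimately have "card (S \<inter> (V - W)) = card S - card (S \<inter> W)" by (simp add: card_Diff_subset)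
      moreover have "card (S \<inter> W) \<le> card S" using \<open>finite S\<close> by (simp add: card_mono)
      ultimately have "real (card (S \<inter> (V - W))) = real (card S) - real (card (S \<inter> W))" by simp
      thus ?thesis using close[OF that] by (simp add: algebra_simps)
    qed
    have degN: "real (card (Nout v)) \<ge> \<delta> * real n" "real (card (Nin v)) \<ge> \<delta> * real n" if "v \<in> V" for v
      using min_semideg_le[OF finV that, of E] md unfolding Nout_def Nin_def out_deg_def in_deg_def by auto
    have NF: "Nout v \<in> F" "Nin v \<in> F" if "v \<in> V" for v using that unfolding F_def by auto
    have tm: "2 * t \<le> 2 * real m / x"
    proof -
      have "\<alpha> * x^3 \<le> real m" using am x3 by simp
      hence "\<alpha> * x^2 \<le> real m / x" using xpos by (simp add: field_simps power3_eq_cube power2_eq_square)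
      thus ?thesis unfolding t_def by simp
    qed
    have tnm: "2 * t \<le> 2 * (real n - real m) / x"
      using tm mle xpos rnm by (smt (verit, ccfv_SIG) divide_right_mono of_nat_mono)
    have pn: "p * real n = real m" unfolding p_def using npos by simp
    
    have bound1: "real (card (S \<inter> W)) \<ge> \<delta> * real m - 2 * t" if "S \<in> F" "real (card S) \<ge> \<delta> * real n" for S
    proof -
      have "real (card S) * p \<ge> \<delta> * real n * p" using that p01 by (intro mult_right_mono) auto
      thus ?thesis using close[OF that(1)] pn by (simp add: algebra_simps)
    qed
    have bound2: "real (card (S \<inter> (V - W))) \<ge> \<delta> * (real n - real m) - 2 * t" if "S \<in> F" "real (card S) \<ge> \<delta> * real n" for S
    proof -
      have "real (card S) * (1 - p) \<ge> \<delta> * real n * (1 - p)" using that p01 by (intro mult_right_mono) auto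
      thus ?thesis using close2[OF that(1)] pn by (simp add: algebra_simps)
    qed
    have Wne: "W \<noteq> {}" using cW mpos by auto
    have finW: "finite W" using WV finV finite_subset by blast
    have A: "real (min_semideg W (induced_arcs E W)) \<ge> \<delta> * real m - 2 * t"
    proof (rule min_semideg_ge[OF finW Wne])
      fix v assume v: "v \<in> W"
      have "out_deg W (induced_arcs E W) v = card (Nout v \<inter> W)"
        unfolding out_deg_def induced_arcs_def Nout_def using v WV by (intro arg_cong[where f=card]) auto
      moreover have "in_deg W (induced_arcs E W) v = card (Nin v \<inter> W)"
        unfolding in_deg_def induced_arcs_def Nin_def using v WV by (intro arg_cong[where f=card]) auto
      ultimately show "real (out_deg W (induced_arcs E W) v) \<ge> \<delta> * real m - 2 * t \<and>
                       real (in_deg W (induced_arcs E W) v) \<ge> \<delta> * real m - 2 * t"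
        using bound1[OF NF(1) degN(1)] bound1[OF NF(2) degN(2)] v WV by auto
    qed
    have VWne: "V - W \<noteq> {}"
    proof -
      have "card (V - W) = n - m" using cV cW WV finV by (simp add: card_Diff_subset finite_subset)
      hence "card (V - W) > 0" using mle mpos by linarith
      thus ?thesis by (metis card.empty less_irrefl)
    qed
    have B: "real (min_semideg (V - W) (induced_arcs E (V - W))) \<ge> \<delta> * (real n - real m) - 2 * t"
    proof (rule min_semideg_ge)
      show "finite (V - W)" using finV by simp
      show "V - W \<noteq> {}" by fact
      fix v assume v: "v \<in> V - W"
      have "out_deg (V - W) (induced_arcs E (V - W)) v = card (Nout v \<inter> (V - W))"
        unfolding out_deg_def induced_arcs_def Nout_def using v by (intro arg_cong[where f=card]) auto
      moreover have "in_deg (V - W) (induced_arcs E (V - W)) v = card (Nin v \<inter> (V - W))"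
        unfolding in_deg_def induced_arcs_def Nin_def using v by (intro arg_cong[where f=card]) auto
      ultimately show "real (out_deg (V - W) (induced_arcs E (V - W)) v) \<ge> \<delta> * (real n - real m) - 2 * t \<and>
                       real (in_deg (V - W) (induced_arcs E (V - W)) v) \<ge> \<delta> * (real n - real m) - 2 * t"
        using bound2[OF NF(1) degN(1)] bound2[OF NF(2) degN(2)] v by auto
    qed
    have mp: "real m > 0" using mpos by simp
    have nmp: "real n - real m > 0" using mle mpos by linarith
    have C1: "\<delta> - 2 * real n powr (-1/3) \<le> real (min_semideg W (induced_arcs E W)) / real m"
    proof -
      have "(\<delta> - 2 / x) * real m \<le> real (min_semideg W (induced_arcs E W))"
        using A tm by (simp add: algebra_simps)
      thus ?thesis unfolding nx using mp by (simp add: field_simps)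
    qed
    have C2: "\<delta> - 2 * real n powr (-1/3) \<le> real (min_semideg (V - W) (induced_arcs E (V - W))) / real (n - m)"
    proof -
      have "(\<delta> - 2 / x) * (real n - real m) \<le> real (min_semideg (V - W) (induced_arcs E (V - W)))"
        using B tnm by (simp add: algebra_simps)
      thus ?thesis unfolding nx rnm using nmp by (simp add: field_simps)
    qed
    show "\<exists>W \<subseteq> V. card W = m \<and>
          real (min_semideg W (induced_arcs E W)) / real m \<ge> \<delta> - 2 * real n powr (-1/3) \<and>
          real (min_semideg (V - W) (induced_arcs E (V - W))) / real (n - m)
             \<ge> \<delta> - 2 * real n powr (-1/3)"
      using WV cW C1 C2 by blast
  qed
qed
end
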